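(* Let $\mathbf{M}$ be a POMDP and $\beta\in[0,1)$. For $k\in\mathbb{N}$ let \[ E_{k,\max}:=\sup_{\mathbf{C}\in\overline{\mathcal{F}}_{k}(\mathbf{M})}\ \sum_{t=2}^{\infty}\beta^{t-2}H^{\mathbf{C}}(S_{t} \mid S^{t-1}). \] Then for all $j\leq k$, $E_{j,\max}\leq E_{k,\max}$.
   Context: A POMDP is $\mathbf{M}=(\mathcal{S},s_I,\mathcal{A},P,\mathcal{Z},O,R)$ with finite state set $\mathcal{S}$, initial state $s_I$, finite action set $\mathcal{A}$, transition probabilities $P(s'|s,a)$, finite observation set $\mathcal{Z}$, observation probabilities $O(z|s)$ and reward $R$. A $k$-FSC is $\mathbf{C}=(\mathcal{Q},q_1,\gamma,\delta)$ with memory states $\mathcal{Q}=\{q_1,\ldots,q_k\}$, initial memory $q_1$, decision function $\gamma:\mathcal{Q}\times\mathcal{Z}\to\Delta(\mathcal{A})$ and memory transition function $\delta:\mathcal{Q}\times\mathcal{Z}\times\mathcal{A}\to\Delta(\mathcal{Q})$. Under $\mathbf{C}$: $S_1=s_I$, $Q_1=q_1$, $Z_t\sim O(\cdot|S_t)$, $A_t\sim\gamma(\cdot|Q_t,Z_t)$, $S_{t+1}\sim P(\cdot|S_t,A_t)$, $Q_{t+1}\sim\delta(\cdot|Q_t,Z_t,A_t)$; $H^{\mathbf{C}}(S_t\mid S^{t-1})$ is the conditional entropy of $S_t$ given $(S_1,\ldots,S_{t-1})$ in this process. $\overline{\mathcal{F}}_k(\mathbf{M})$ is the set of $k$-FSCs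 (with arbitrary $\gamma$) whose memory transition function is $\overline{\delta}$ given by: for all $z\in\mathcal{Z}$, $a\in\mathcal{A}$, $\overline{\delta}(q_{i+1}|q_i,z,a)=1$ for $1\le i<k$, $\overline{\delta}(q_k|q_k,z,a)=1$, and $\overline{\delta}(q_i|q_j,z,a)=0$ otherwise. *)

theory Defs
  imports "HOL-Analysis.Analysis" "HOL-Library.FuncSet"
begin

text \<open>POMDP with finite state type 's, action type 'a, observation type 'z.
  P s a s' = P(s'|s,a), Obs s z = O(z|s). The reward plays no role in the statement.\<close>

definition is_pomdp :: "('s::finite \<Rightarrow> 'a::finite \<Rightarrow> 's \<Rightarrow> real) \<Rightarrow> ('s \<Rightarrow> 'z::finite \<Rightarrow> real) \<Rightarrow> bool" where
  "is_pomdp P Obs \<longleftrightarrow>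
     (\<forall>s a s'. 0 \<le> P s a s') \<and> (\<forall>s a. (\<Sum>s'\<in>UNIV. P s a s') = 1) \<and>
     (\<forall>s z. 0 \<le> Obs s z) \<and> (\<forall>s. (\<Sum>z\<in>UNIV. Obs s z) = 1)"

text \<open>A k-FSC has memory states q_1..q_k, represented as the naturals 1..k, initial memory 1.
  gam q z a = gamma(a|q,z); del q z a q' = delta(q'|q,z,a).\<close>

definition valid_decision :: "nat \<Rightarrow> (nat \<Rightarrow> 'z::finite \<Rightarrow> 'a::finite \<Rightarrow> real) \<Rightarrow> bool" where
  "valid_decision k gam \<longleftrightarrow>
     (\<forall>q\<in>{1..k}. \<forall>z. (\<forall>a. 0 \<le> gam q z a) \<and> (\<Sum>a\<in>UNIV. gam q z a) = 1)"

definition delta_bar :: "nat \<Rightarrow> nat \<Rightarrow> 'z \<Rightarrow> 'a \<Rightarrow> nat \<Rightarrow> real" where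
  "delta_bar k q z a q' =
     (if q < k then (if q' = q + 1 then 1 else 0)
      else if q = k then (if q' = k then 1 else 0) else 0)"

text \<open>fsc_alpha ... t ss q = Pr(S_1 = ss 1, ..., S_t = ss t, Q_t = q) under the controller.\<close>
fun fsc_alpha :: "('s::finite \<Rightarrow> 'a::finite \<Rightarrow> 's \<Rightarrow> real) \<Rightarrow> ('s \<Rightarrow> 'z::finite \<Rightarrow> real) \<Rightarrow> 's \<Rightarrow> nat
     \<Rightarrow> (nat \<Rightarrow> 'z \<Rightarrow> 'a \<Rightarrow> real) \<Rightarrow> (nat \<Rightarrow> 'z \<Rightarrow> 'a \<Rightarrow> nat \<Rightarrow> real)
     \<Rightarrow> nat \<Rightarrow> (nat \<Rightarrow> 's) \<Rightarrow> nat \<Rightarrow> real" where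
  "fsc_alpha P Obs sI k gam del 0 ss q = 0"
| "fsc_alpha P Obs sI k gam del (Suc 0) ss q = (if ss 1 = sI \<and> q = 1 then 1 else 0)"
| "fsc_alpha P Obs sI k gam del (Suc (Suc t)) ss q' =
     (\<Sum>q\<in>{1..k}. \<Sum>z\<in>UNIV. \<Sum>a\<in>UNIV.
        fsc_alpha P Obs sI k gam del (Suc t) ss q * Obs (ss (Suc t)) z * gam q z a
        * P (ss (Suc t)) a (ss (Suc (Suc t))) * del q z a q')"

definition state_seq_prob ::"('s::finite \<Rightarrow> 'a::finite \<Rightarrow> 's \<Rightarrow> real) \<Rightarrow> ('s \<Rightarrow> 'z::finite \<Rightarrow> real) \<Rightarrow> 's \<Rightarrow> nat
     \<Rightarrow> (nat \<Rightarrow> 'z \<Rightarrow> 'a \<Rightarrow> real) \<Rightarrow> (nat \<Rightarrow> 'z \<Rightarrow> 'a \<Rightarrow> nat \<Rightarrow> real) \<Rightarrow> nat \<Rightarrow> (nat \<Rightarrow> 's) \<Rightarrow> real" where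
  "state_seq_prob P Obs sI k gam del t ss = (\<Sum>q\<in>{1..k}. fsc_alpha P Obs sI k gam del t ss q)"

text \<open>Conditional entropy H(S_t | S^{t-1}) (natural logarithm, 0 log 0 = 0), for t >= 2.\<close>
definition cond_entropy ::"('s::finite \<Rightarrow> 'a::finite \<Rightarrow> 's \<Rightarrow> real) \<Rightarrow> ('s \<Rightarrow> 'z::finite \<Rightarrow> real) \<Rightarrow> 's \<Rightarrow> nat
     \<Rightarrow> (nat \<Rightarrow> 'z \<Rightarrow> 'a \<Rightarrow> real) \<Rightarrow> (nat \<Rightarrow> 'z \<Rightarrow> 'a \<Rightarrow> nat \<Rightarrow> real) \<Rightarrow> nat \<Rightarrow> real" where
  "cond_entropy P Obs sI k gam del t =
     (\<Sum>ss\<in>{1..t} \<rightarrow>\<^sub>E (UNIV::'s set).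
        let p = state_seq_prob P Obs sI k gam del t ss;
            p' = state_seq_prob P Obs sI k gam del (t - 1) ss
        in if p = 0 then 0 else - p * ln (p / p'))"

definition disc_entropy ::"('s::finite \<Rightarrow> 'a::finite \<Rightarrow> 's \<Rightarrow> real) \<Rightarrow> ('s \<Rightarrow> 'z::finite \<Rightarrow> real) \<Rightarrow> 's \<Rightarrow> nat
     \<Rightarrow> (nat \<Rightarrow> 'z \<Rightarrow> 'a \<Rightarrow> real) \<Rightarrow> (nat \<Rightarrow> 'z \<Rightarrow> 'a \<Rightarrow> nat \<Rightarrow> real) \<Rightarrow> real \<Rightarrow> real" where
  "disc_entropy P Obs sI k gam del \<beta> =
     (\<Sum>n. \<beta> ^ n * cond_entropy P Obs (sI::'s::finite) k gam del (n + 2))"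

definition E_max where
  "E_max P Obs sI \<beta> k =
     Sup {disc_entropy P Obs sI k gam (delta_bar k) \<beta> | gam. valid_decision k gam}"

end

theory Submission
  imports Defs
begin

fun pol_beta :: "('s::finite \<Rightarrow> 'a::finite \<Rightarrow> 's \<Rightarrow> real) \<Rightarrow> ('s \<Rightarrow> 'z::finite \<Rightarrow> real) \<Rightarrow> 's
   \<Rightarrow> (nat \<Rightarrow> 'z \<Rightarrow> 'a \<Rightarrow> real) \<Rightarrow> nat \<Rightarrow> (nat \<Rightarrow> 's) \<Rightarrow> real" where
  "pol_beta P Obs sI G 0 ss = 0"
| "pol_beta P Obs sI G (Suc 0) ss = (if ss 1 = sI then 1 else 0)"
| "pol_beta P Obs sI G (Suc (Suc t)) ss = pol_beta P Obs sI G (Suc t) ss *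
     (\<Sum>z\<in>UNIV. \<Sum>a\<in>UNIV. Obs (ss (Suc t)) z * G (Suc t) z a * P (ss (Suc t)) a (ss (Suc (Suc t))))"

lemma delta_bar_min:
  assumes "1 \<le> k"
  shows "delta_bar k (min (Suc t) k) z a q' = (if q' = min (Suc (Suc t)) k then 1 else 0)"
  using assms by (auto simp: delta_bar_def min_def)

lemma alpha_form:
  assumes k: "1 \<le> k"
  shows "fsc_alpha P Obs sI k gam (delta_bar k) (Suc t) ss q =
     (if q = min (Suc t) k then pol_beta P Obs sI (\<lambda>t. gam (min t k)) (Suc t) ss else 0)"
proof (induction t arbitrary: q)
  case 0
  then show ?case using k by auto
next
  case (Suc t)
  let ?m = "min (Suc t) k"
  let ?b = "pol_beta P Obs sI (\<lambda>t. gam (min t k)) (Suc t) ss"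
  have m: "?m \<in> {1..k}" using k by auto
  have "fsc_alpha P Obs sI k gam (delta_bar k) (Suc (Suc t)) ss q =
     (\<Sum>q0\<in>{1..k}. if q0 = ?m then (\<Sum>z\<in>UNIV. \<Sum>a\<in>UNIV.
        ?b * Obs (ss (Suc t)) z * gam ?m z a
        * P (ss (Suc t)) a (ss (Suc (Suc t))) * delta_bar k ?m z a q) else 0)"
    by (simp only: fsc_alpha.simps Suc.IH, intro sum.cong refl) auto
  also have "\<dots> = (\<Sum>z\<in>UNIV. \<Sum>a\<in>UNIV.
        ?b * Obs (ss (Suc t)) z * gam ?m z a
        * P (ss (Suc t)) a (ss (Suc (Suc t))) * delta_bar k ?m z a q)"
    using m by (simp add: sum.delta)
  also have "\<dots> = (if q = min (Suc (Suc t)) k then ?b * (\<Sum>z\<in>UNIV. \<Sum>a\<in>UNIV.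
        Obs (ss (Suc t)) z * gam ?m z a * P (ss (Suc t)) a (ss (Suc (Suc t)))) else 0)"
    by (simp add: delta_bar_min[OF k] sum_distrib_left mult.assoc)
  finally show ?case by simp
qed

lemma ssp_form:
  assumes k: "1 \<le> k"
  shows "state_seq_prob P Obs sI k gam (delta_bar k) t ss = pol_beta P Obs sI (\<lambda>t. gam (min t k)) t ss"
proof (cases t)
  case 0
  then show ?thesis by (simp add: state_seq_prob_def)
next
  case (Suc n)
  have m: "min (Suc n) k \<in> {1..k}" using k by auto
  show ?thesis unfolding state_seq_prob_def Suc alpha_form[OF k]
    using m by (simp add: sum.delta)
qed

lemma PiE_split_sum:
  fixes g :: "(nat \<Rightarrow> 's::finite) \<Rightarrow> real"
  shows "(\<Sum>f\<in>{1..Suc n} \<rightarrow>\<^sub>E (UNIV::'s set). g f) =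
         (\<Sum>s\<in>UNIV. \<Sum>f\<in>{1..n} \<rightarrow>\<^sub>E (UNIV::'s set). g (f(Suc n := s)))"
proof -
  have e: "{1..Suc n} = insert (Suc n) {1..n}" by auto
  have nin: "Suc n \<notin> {1..n}" by simp
  have "(\<Sum>f\<in>{1..Suc n} \<rightarrow>\<^sub>E (UNIV::'s set). g f) =
     (\<Sum>f\<in>(\<lambda>(y, g). g(Suc n := y)) ` ((UNIV::'s set) \<times> ({1..n} \<rightarrow>\<^sub>E (UNIV::'s set))). g f)"
    unfolding e PiE_insert_eq by simp
  also have "\<dots> = (\<Sum>x\<in>(UNIV::'s set) \<times> ({1..n} \<rightarrow>\<^sub>E (UNIV::'s set)). g ((\<lambda>(y, g). g(Suc n := y)) x))"
    using inj_combinator[OF nin, of "\<lambda>_. (UNIV::'s set)"] by (simp add: sum.reindex)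
  also have "\<dots> = (\<Sum>s\<in>UNIV. \<Sum>f\<in>{1..n} \<rightarrow>\<^sub>E (UNIV::'s set). g (f(Suc n := s)))"
    by (simp add: sum.cartesian_product split_def)
  finally show ?thesis .
qed

locale pb =
  fixes P :: "'s::finite \<Rightarrow> 'a::finite \<Rightarrow> 's \<Rightarrow> real"
    and Obs :: "'s \<Rightarrow> 'z::finite \<Rightarrow> real"
    and sI :: 's and G :: "nat \<Rightarrow> 'z \<Rightarrow> 'a \<Rightarrow> real"
  assumes hP: "is_pomdp P Obs"
    and hG: "\<And>t z a. 1 \<le> t \<Longrightarrow> 0 \<le> G t z a"
    and hG1: "\<And>t z. 1 \<le> t \<Longrightarrow> (\<Sum>a\<in>UNIV. G t z a) = 1"
begin

abbreviation "b \<equiv> pol_beta P Obs sI G"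

lemma P_nonneg: "0 \<le> P s a s'" using hP by (simp add: is_pomdp_def)
lemma P_sum: "(\<Sum>s'\<in>UNIV. P s a s') = 1" using hP by (simp add: is_pomdp_def)
lemma O_nonneg: "0 \<le> Obs s z" using hP by (simp add: is_pomdp_def)
lemma O_sum: "(\<Sum>z\<in>UNIV. Obs s z) = 1" using hP by (simp add: is_pomdp_def)
lemma P_le1: "P s a s' \<le> 1"
proof -
  have "P s a s' \<le> (\<Sum>s'\<in>UNIV. P s a s')"
    by (rule member_le_sum) (auto simp: P_nonneg)
  then show ?thesis by (simp add: P_sum)
qed

lemma factor_nonneg: "0 \<le> (\<Sum>z\<in>UNIV. \<Sum>a\<in>UNIV. Obs s z * G (Suc t) z a * P s a s')"
  by (intro sum_nonneg mult_nonneg_nonneg O_nonneg hG P_nonneg) auto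

lemma factor_le1: "(\<Sum>z\<in>UNIV. \<Sum>a\<in>UNIV. Obs s z * G (Suc t) z a * P s a s') \<le> 1"
proof -
  have "(\<Sum>z\<in>UNIV. \<Sum>a\<in>UNIV. Obs s z * G (Suc t) z a * P s a s') \<le>
        (\<Sum>z\<in>UNIV. \<Sum>a\<in>UNIV. Obs s z * G (Suc t) z a)"
    by (intro sum_mono mult_left_le mult_nonneg_nonneg O_nonneg hG P_le1 P_nonneg) auto
  also have "\<dots> = (\<Sum>z\<in>UNIV. Obs s z)" by (simp add: sum_distrib_left[symmetric] hG1)
  finally show ?thesis by (simp add: O_sum)
qed

lemma factor_sum: "(\<Sum>s'\<in>UNIV. \<Sum>z\<in>UNIV. \<Sum>a\<in>UNIV. Obs s z * G (Suc t) z a * P s a s') = 1"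
proof -
  have "(\<Sum>s'\<in>UNIV. \<Sum>z\<in>UNIV. \<Sum>a\<in>UNIV. Obs s z * G (Suc t) z a * P s a s') =
      (\<Sum>z\<in>UNIV. \<Sum>a\<in>UNIV. \<Sum>s'\<in>UNIV. Obs s z * G (Suc t) z a * P s a s')"
    by (subst sum.swap, rule sum.cong[OF refl], rule sum.swap)
  also have "\<dots> = (\<Sum>z\<in>UNIV. \<Sum>a\<in>UNIV. Obs s z * G (Suc t) z a)"
    by (simp add: sum_distrib_left[symmetric] P_sum)
  also have "\<dots> = (\<Sum>z\<in>UNIV. Obs s z)" by (simp add: sum_distrib_left[symmetric] hG1)
  finally show ?thesis by (simp add: O_sum)
qed

lemma b_nonneg_Suc: "0 \<le> b (Suc t) ss"
  by (induction t) (auto intro!: mult_nonneg_nonneg factor_nonneg)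

lemma b_nonneg: "0 \<le> b t ss"
  by (cases t) (auto simp: b_nonneg_Suc)

lemma b_mono: "b (Suc (Suc t)) ss \<le> b (Suc t) ss"
  using mult_left_le[OF factor_le1 b_nonneg] by simp

lemma b_dep_Suc: "(\<And>i. i \<in> {1..Suc t} \<Longrightarrow> ss i = ss' i) \<Longrightarrow> b (Suc t) ss = b (Suc t) ss'"
proof (induction t)
  case 0
  then show ?case by auto
next
  case (Suc t)
  have "b (Suc t) ss = b (Suc t) ss'" using Suc by auto
  moreover have "ss (Suc t) = ss' (Suc t)" "ss (Suc (Suc t)) = ss' (Suc (Suc t))" using Suc(2) by auto
  ultimately show ?case by simp
qed

lemma b_dep: "(\<And>i. i \<in> {1..t} \<Longrightarrow> ss i = ss' i) \<Longrightarrow> b t ss = b t ss'"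
  by (cases t) (auto intro: b_dep_Suc)

lemma b_total: "(\<Sum>ss\<in>{1..Suc n} \<rightarrow>\<^sub>E (UNIV::'s set). b (Suc n) ss) = 1"
proof (induction n)
  case 0
  show ?case by (subst PiE_split_sum) (simp add: sum.delta)
next
  case (Suc n)
  let ?F = "\<lambda>f s. (\<Sum>z\<in>UNIV. \<Sum>a\<in>UNIV. Obs (f (Suc n)) z * G (Suc n) z a * P (f (Suc n)) a s)"
  have "(\<Sum>ss\<in>{1..Suc (Suc n)} \<rightarrow>\<^sub>E (UNIV::'s set). b (Suc (Suc n)) ss) =
     (\<Sum>s\<in>UNIV. \<Sum>f\<in>{1..Suc n} \<rightarrow>\<^sub>E (UNIV::'s set). b (Suc (Suc n)) (f(Suc (Suc n) := s)))"
    by (rule PiE_split_sum)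
  also have "\<dots> = (\<Sum>s\<in>UNIV. \<Sum>f\<in>{1..Suc n} \<rightarrow>\<^sub>E (UNIV::'s set). b (Suc n) f * ?F f s)"
  proof (intro sum.cong refl)
    fix s f
    have "b (Suc n) (f(Suc (Suc n) := s)) = b (Suc n) f" by (rule b_dep) auto
    then show "b (Suc (Suc n)) (f(Suc (Suc n) := s)) = b (Suc n) f * ?F f s" by simp
  qed
  also have "\<dots> = (\<Sum>f\<in>{1..Suc n} \<rightarrow>\<^sub>E (UNIV::'s set). b (Suc n) f * (\<Sum>s\<in>UNIV. ?F f s))"
    by (subst sum.swap) (simp add: sum_distrib_left)
  also have "\<dots> = (\<Sum>f\<in>{1..Suc n} \<rightarrow>\<^sub>E (UNIV::'s set). b (Suc n) f)"
    using factor_sum by simp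
  finally show ?case using Suc by simp
qed

definition eterm :: "nat \<Rightarrow> (nat \<Rightarrow> 's) \<Rightarrow> real" where
  "eterm t ss = (let p = b t ss; p' = b (t - 1) ss in if p = 0 then 0 else - p * ln (p / p'))"

lemma eterm_bounds: "0 \<le> eterm (Suc (Suc m)) ss \<and> eterm (Suc (Suc m)) ss \<le> b (Suc m) ss"
proof (cases "b (Suc (Suc m)) ss = 0")
  case True
  then show ?thesis by (simp add: eterm_def b_nonneg)
next
  case False
  define p where "p = b (Suc (Suc m)) ss"
  define p' where "p' = b (Suc m) ss"
  have pp: "0 < p" using False b_nonneg[of "Suc (Suc m)" ss] unfolding p_def by linarith
  have le: "p \<le> p'" unfolding p_def p'_def by (rule b_mono)
  have pp': "0 < p'" using pp le by linarith
  have e: "eterm (Suc (Suc m)) ss = p * ln (p' / p)"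
  proof -
    have "eterm (Suc (Suc m)) ss = (if p = 0 then 0 else - p * ln (p / p'))"
      by (simp only: eterm_def Let_def p_def p'_def diff_Suc_1)
    also have "\<dots> = - p * ln (p / p')" using pp by simp
    also have "\<dots> = p * ln (p' / p)" using pp pp' by (simp add: ln_div algebra_simps)
    finally show ?thesis .
  qed
  have "0 \<le> ln (p' / p)" using pp le by simp
  then have 1: "0 \<le> p * ln (p' / p)" using pp by simp
  have "ln (p' / p) \<le> p' / p - 1" using pp pp' by (intro ln_le_minus_one) simp
  then have "p * ln (p' / p) \<le> p * (p' / p - 1)" using pp by (simp add: mult_left_mono)
  also have "\<dots> = p' - p" using pp by (simp add: field_simps)
  finally show ?thesis using 1 e pp unfolding p'_def by simp
qed

lemma eterm_sum_bounds:
  "0 \<le> (\<Sum>ss\<in>{1..Suc (Suc m)} \<rightarrow>\<^sub>E (UNIV::'s set). eterm (Suc (Suc m)) ss) \<and>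
   (\<Sum>ss\<in>{1..Suc (Suc m)} \<rightarrow>\<^sub>E (UNIV::'s set). eterm (Suc (Suc m)) ss) \<le> real CARD('s)"
proof
  show "0 \<le> (\<Sum>ss\<in>{1..Suc (Suc m)} \<rightarrow>\<^sub>E (UNIV::'s set). eterm (Suc (Suc m)) ss)"
    using eterm_bounds by (intro sum_nonneg) blast
  have "(\<Sum>ss\<in>{1..Suc (Suc m)} \<rightarrow>\<^sub>E (UNIV::'s set). eterm (Suc (Suc m)) ss) \<le>
        (\<Sum>ss\<in>{1..Suc (Suc m)} \<rightarrow>\<^sub>E (UNIV::'s set). b (Suc m) ss)"
    using eterm_bounds by (intro sum_mono) blast
  also have "\<dots> = (\<Sum>s\<in>UNIV. \<Sum>f\<in>{1..Suc m} \<rightarrow>\<^sub>E (UNIV::'s set). b (Suc m) (f(Suc (Suc m) := s)))"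
    by (rule PiE_split_sum)
  also have "\<dots> = (\<Sum>s\<in>(UNIV::'s set). \<Sum>f\<in>{1..Suc m} \<rightarrow>\<^sub>E (UNIV::'s set). b (Suc m) f)"
  proof (intro sum.cong refl)
    fix s f
    show "b (Suc m) (f(Suc (Suc m) := s)) = b (Suc m) f" by (rule b_dep) auto
  qed
  also have "\<dots> = real CARD('s)" using b_total[of m] by simp
  finally show "(\<Sum>ss\<in>{1..Suc (Suc m)} \<rightarrow>\<^sub>E (UNIV::'s set). eterm (Suc (Suc m)) ss) \<le> real CARD('s)" .
qed

end

lemma pb_interp:
  assumes "is_pomdp P Obs" "valid_decision k gam" "1 \<le> k"
  shows "pb P Obs (\<lambda>t. gam (min t k))"
  unfolding pb_def using assms by (auto simp: valid_decision_def)

lemma ce_bounds: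
  fixes P :: "'s::finite \<Rightarrow> 'a::finite \<Rightarrow> 's \<Rightarrow> real" and Obs :: "'s \<Rightarrow> 'z::finite \<Rightarrow> real"
  assumes "is_pomdp P Obs" "valid_decision k gam" "1 \<le> k"
  shows "0 \<le> cond_entropy P Obs sI k gam (delta_bar k) (Suc (Suc m)) \<and>
         cond_entropy P Obs sI k gam (delta_bar k) (Suc (Suc m)) \<le> real CARD('s)"
proof -
  interpret pb P Obs sI "\<lambda>t. gam (min t k)" by (rule pb_interp[OF assms])
  have "cond_entropy P Obs sI k gam (delta_bar k) (Suc (Suc m)) =
     (\<Sum>ss\<in>{1..Suc (Suc m)} \<rightarrow>\<^sub>E (UNIV::'s set). pb.eterm P Obs sI (\<lambda>t. gam (min t k)) (Suc (Suc m)) ss)"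
    unfolding cond_entropy_def eterm_def ssp_form[OF assms(3)] by simp
  then show ?thesis using eterm_sum_bounds[of m] by simp
qed

lemma disc_bound:
  fixes c :: "nat \<Rightarrow> real"
  assumes "\<And>n. 0 \<le> c n \<and> c n \<le> C" "0 \<le> \<beta>" "\<beta> < 1"
  shows "(\<Sum>n. \<beta> ^ n * c n) \<le> C / (1 - \<beta>)"
proof -
  have g: "summable (\<lambda>n. \<beta> ^ n)" using assms by (simp add: summable_geometric)
  have s: "summable (\<lambda>n. \<beta> ^ n * C)" using g by (rule summable_mult2)
  have le: "\<And>n. \<beta> ^ n * c n \<le> \<beta> ^ n * C" using assms by (simp add: mult_left_mono)
  have s2: "summable (\<lambda>n. \<beta> ^ n * c n)"
    by (rule summable_comparison_test'[OF s, of 0]) (use assms le in simp)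
  have "(\<Sum>n. \<beta> ^ n * c n) \<le> (\<Sum>n. \<beta> ^ n * C)" by (rule suminf_le[OF le s2 s])
  also have "\<dots> = (\<Sum>n. \<beta> ^ n) * C" using g by (simp add: suminf_mult2)
  also have "\<dots> = C / (1 - \<beta>)" using assms by (simp add: suminf_geometric)
  finally show ?thesis .
qed

lemma disc_le:
  fixes P :: "'s::finite \<Rightarrow> 'a::finite \<Rightarrow> 's \<Rightarrow> real" and Obs :: "'s \<Rightarrow> 'z::finite \<Rightarrow> real"
  assumes "is_pomdp P Obs" "valid_decision k gam" "1 \<le> k" "0 \<le> \<beta>" "\<beta> < 1"
  shows "disc_entropy P Obs sI k gam (delta_bar k) \<beta> \<le> real CARD('s) / (1 - \<beta>)"
  unfolding disc_entropy_def
  by (rule disc_bound) (use ce_bounds[OF assms(1-3)] assms(4,5) in \<open>simp_all add: numeral_2_eq_2\<close>)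

lemma disc_eq:
  assumes "1 \<le> j" "j \<le> k"
  shows "disc_entropy P Obs sI j gam (delta_bar j) \<beta> =
         disc_entropy P Obs sI k (\<lambda>q. gam (min q j)) (delta_bar k) \<beta>"
proof -
  have f: "(\<lambda>t. gam (min (min t k) j)) = (\<lambda>t. gam (min t j))"
    using assms by (auto simp: min_def)
  have "1 \<le> k" using assms by simp
  then show ?thesis
    unfolding disc_entropy_def cond_entropy_def ssp_form[OF assms(1)] ssp_form[OF \<open>1 \<le> k\<close>] f
    by simp
qed

theorem lemma2:
  fixes P :: "'s::finite \<Rightarrow> 'a::finite \<Rightarrow> 's \<Rightarrow> real"
    and Obs :: "'s \<Rightarrow> 'z::finite \<Rightarrow> real"
    and sI :: 's and \<beta> :: real and j k :: nat
  assumes "is_pomdp P Obs"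
    and "0 \<le> \<beta>" and "\<beta> < 1"
    and "1 \<le> j" and "j \<le> k"
  shows "E_max P Obs sI \<beta> j \<le> E_max P Obs sI \<beta> k"
proof -
  have k1: "1 \<le> k" using assms by simp
  let ?u = "\<lambda>(q::nat) (z::'z) (a::'a). 1 / real CARD('a)"
  have u: "valid_decision j ?u" unfolding valid_decision_def by simp
  show ?thesis unfolding E_max_def
  proof (rule cSup_mono)
    show "{disc_entropy P Obs sI j gam (delta_bar j) \<beta> |gam. valid_decision j gam} \<noteq> {}"
      using u by blast
    show "bdd_above {disc_entropy P Obs sI k gam (delta_bar k) \<beta> |gam. valid_decision k gam}"
      unfolding bdd_above_def using disc_le[OF assms(1) _ k1 assms(2,3)] by blast
    fix x assume "x \<in> {disc_entropy P Obs sI j gam (delta_bar j) \<beta> |gam. valid_decision j gam}"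
    then obtain gam where x: "x = disc_entropy P Obs sI j gam (delta_bar j) \<beta>" and vg: "valid_decision j gam"
      by blast
    have "valid_decision k (\<lambda>q. gam (min q j))"
      using vg assms(4) unfolding valid_decision_def by (auto simp: min_def)
    then show "\<exists>y\<in>{disc_entropy P Obs sI k gam (delta_bar k) \<beta> |gam. valid_decision k gam}. x \<le> y"
      using disc_eq[OF assms(4,5), of P Obs sI gam \<beta>] x by blast
  qed
qed

end
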